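(* Let $n\ge2$ and let $P\in\mathrm{Mat}(n^2,\mathbb{C})$ be an orthogonal projection ($P^*=P$, $P^2=P$) of rank $r$. With $P_1=P\otimes I_n$, $P_2=I_n\otimes P$ and $t_m=\operatorname{tr}_3\big((P_1P_2)^m\big)$, define $$F[P]=(rn-t_1)(t_2-t_3)-(t_1-t_2)^2 .$$ Then $F[P]\ge 0$.
   Context: $I_n$ is the $n\times n$ identity matrix, $\otimes$ is the Kronecker product, and $\operatorname{tr}_3$ is the matrix trace on $\mathrm{Mat}(n^3,\mathbb{C})$; $(P_1P_2)^m$ is the $m$-th power of the matrix $P_1P_2$. *)

theory Defs
  imports "Jordan_Normal_Form.Schur_Decomposition" "Jordan_Normal_Form.DL_Rank" "HOL-Library.Complex_Order"
begin

definition kron :: "'a :: times mat \<Rightarrow> 'a mat \<Rightarrow> 'a mat" where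
  "kron A B = mat (dim_row A * dim_row B) (dim_col A * dim_col B)
     (\<lambda>(i, j). A $$ (i div dim_row B, j div dim_col B) * B $$ (i mod dim_row B, j mod dim_col B))"

definition mat_trace :: "'a :: comm_monoid_add mat \<Rightarrow> 'a" where
  "mat_trace A = (\<Sum>i<dim_row A. A $$ (i, i))"

end

theory Submission
  imports Defs "HOL-Analysis.Convex"
begin


lemma sum_mult_split: "(\<Sum>k<(a::nat)*b. f k) = (\<Sum>i<a. \<Sum>j<b. f (i*b+j))"
proof (induction a)
  case 0 then show ?case by simp
next
  case (Suc a)
  have "(\<Sum>k<Suc a*b. f k) = (\<Sum>k\<in>{0..<a*b+b}. f k)"
    by (simp add: lessThan_atLeast0 add.commute)
  also have "\<dots> = (\<Sum>k\<in>{0..<a*b}. f k) + (\<Sum>k\<in>{a*b..<a*b+b}. f k)"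
    by (rule sum.atLeastLessThan_concat[symmetric]) auto
  also have "(\<Sum>k\<in>{a*b..<a*b+b}. f k) = (\<Sum>j\<in>{0..<b}. f (j+a*b))"
    using sum.shift_bounds_nat_ivl[of f 0 "a*b" b] by (simp add: add.commute)
  also have "\<dots> = (\<Sum>j<b. f (a*b+j))"
    by (simp add: lessThan_atLeast0 add.commute)
  also have "(\<Sum>k\<in>{0..<a*b}. f k) = (\<Sum>k<a*b. f k)" by (simp add: lessThan_atLeast0)
  finally show ?case using Suc by simp
qed

lemma kron_carrier[simp]: "kron A B \<in> carrier_mat (dim_row A * dim_row B) (dim_col A * dim_col B)"
  by (simp add: kron_def)
lemma kron_dims[simp]: "dim_row (kron A B) = dim_row A * dim_row B" "dim_col (kron A B) = dim_col A * dim_col B"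
  by (simp_all add: kron_def)
lemma kron_index[simp]: "i < dim_row A * dim_row B \<Longrightarrow> j < dim_col A * dim_col B \<Longrightarrow>
  kron A B $$ (i,j) = A $$ (i div dim_row B, j div dim_col B) * B $$ (i mod dim_row B, j mod dim_col B)"
  by (simp add: kron_def)

lemma kron_mult:
  fixes A C :: "'a::comm_semiring_1 mat"
  assumes A: "A \<in> carrier_mat a a'" and B: "B \<in> carrier_mat b b'" and C: "C \<in> carrier_mat a' a''"
    and D: "D \<in> carrier_mat b' b''"
  shows "kron A B * kron C D = kron (A*C) (B*D)"
proof (rule eq_matI)
  fix i j assume i: "i < dim_row (kron (A*C) (B*D))" and j: "j < dim_col (kron (A*C) (B*D))"
  have i': "i < a*b" and j': "j < a''*b''" using i j A B C D by auto
  have ia: "i div b < a" using i' by (simp add: less_mult_imp_div_less)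
  have ib: "i mod b < b" using i' by (cases "b=0") auto
  have ja: "j div b'' < a''" using j' by (simp add: less_mult_imp_div_less)
  have jb: "j mod b'' < b''" using j' by (cases "b''=0") auto
  have "(kron A B * kron C D) $$ (i,j) = (\<Sum>k<a'*b'. kron A B $$ (i,k) * kron C D $$ (k,j))"
    using i j A B C D by (simp add: scalar_prod_def atLeast0LessThan)
  also have "\<dots> = (\<Sum>p<a'. \<Sum>q<b'. kron A B $$ (i,p*b'+q) * kron C D $$ (p*b'+q,j))"
    by (rule sum_mult_split)
  also have "\<dots> = (\<Sum>p<a'. \<Sum>q<b'. (A $$ (i div b, p) * C $$ (p, j div b'')) * (B $$ (i mod b, q) * D $$ (q, j mod b'')))"
  proof (intro sum.cong refl)
    fix p q assume p: "p \<in> {..<a'}" and q: "q \<in> {..<b'}"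
    have "(p+1)*b' \<le> a'*b'" using p by (intro mult_le_mono1) simp
    then have k: "p*b'+q < a'*b'" using q by simp
    have d: "(p*b'+q) div b' = p" "(p*b'+q) mod b' = q" using q by auto
    show "kron A B $$ (i,p*b'+q) * kron C D $$ (p*b'+q,j) = (A $$ (i div b, p) * C $$ (p, j div b'')) * (B $$ (i mod b, q) * D $$ (q, j mod b''))"
      using i j k A B C D d by (simp add: ac_simps)
  qed
  also have "\<dots> = (\<Sum>p<a'. A $$ (i div b, p) * C $$ (p, j div b'')) * (\<Sum>q<b'. B $$ (i mod b, q) * D $$ (q, j mod b''))"
    by (rule sum_product[symmetric])
  also have "\<dots> = kron (A*C) (B*D) $$ (i,j)"
    using i j ia ib ja jb A B C D by (simp add: scalar_prod_def atLeast0LessThan)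
  finally show "(kron A B * kron C D) $$ (i,j) = kron (A*C) (B*D) $$ (i,j)" .
qed (use A B C D in simp_all)



lemma adj_dims[simp]: "dim_row (mat_adjoint A) = dim_col A" "dim_col (mat_adjoint A) = dim_row A"
  unfolding mat_adjoint_def by (simp_all only: mat_of_rows_carrier length_map cols_length)

lemma adj_carrier[simp]: "mat_adjoint A \<in> carrier_mat (dim_col A) (dim_row A)"
  unfolding carrier_mat_def adj_dims by simp

lemma adj_index[simp]: "i < dim_col A \<Longrightarrow> j < dim_row A \<Longrightarrow> mat_adjoint (A::complex mat) $$ (i,j) = cnj (A $$ (j,i))"
  unfolding mat_adjoint_def
  by (subst mat_of_rows_index) (simp_all only: length_map cols_length nth_map cols_nth vec_index_conjugate index_col dim_col conjugate_complex_def)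

lemma adj_kron: "mat_adjoint (kron (A::complex mat) B) = kron (mat_adjoint A) (mat_adjoint B)"
proof (rule eq_matI)
  fix i j assume i: "i < dim_row (kron (mat_adjoint A) (mat_adjoint B))" and j: "j < dim_col (kron (mat_adjoint A) (mat_adjoint B))"
  have i': "i < dim_col A * dim_col B" and j': "j < dim_row A * dim_row B" using i j by auto
  have ia: "i div dim_col B < dim_col A" using i' by (simp add: less_mult_imp_div_less)
  have ib: "i mod dim_col B < dim_col B" using i' by (cases "dim_col B=0") auto
  have ja: "j div dim_row B < dim_row A" using j' by (simp add: less_mult_imp_div_less)
  have jb: "j mod dim_row B < dim_row B" using j' by (cases "dim_row B=0") auto
  show "mat_adjoint (kron A B) $$ (i,j) = kron (mat_adjoint A) (mat_adjoint B) $$ (i,j)"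
    using i' j' ia ib ja jb by simp
qed simp_all

lemma adj_one[simp]: "mat_adjoint (1\<^sub>m n :: complex mat) = 1\<^sub>m n"
  by (rule eq_matI) auto

lemma adj_mult: assumes "A \<in> carrier_mat a b" "B \<in> carrier_mat b c"
  shows "mat_adjoint ((A::complex mat) * B) = mat_adjoint B * mat_adjoint A"
proof (rule eq_matI)
  fix i j assume "i < dim_row (mat_adjoint B * mat_adjoint A)" "j < dim_col (mat_adjoint B * mat_adjoint A)"
  then show "mat_adjoint (A * B) $$ (i,j) = (mat_adjoint B * mat_adjoint A) $$ (i,j)"
    using assms by (simp add: scalar_prod_def ac_simps)
qed (use assms in simp_all)

lemma adj_minus: assumes "A \<in> carrier_mat a b" "B \<in> carrier_mat a b"
  shows "mat_adjoint ((A::complex mat) - B) = mat_adjoint A - mat_adjoint B"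
  by (rule eq_matI) (use assms in auto)

lemma trace_comm: assumes "A \<in> carrier_mat m k" "B \<in> carrier_mat k m"
  shows "mat_trace (A * B) = mat_trace ((B * A) :: 'a::comm_semiring_1 mat)"
proof -
  have "mat_trace (A*B) = (\<Sum>i<m. \<Sum>j<k. A $$ (i,j) * B $$ (j,i))"
    using assms by (simp add: mat_trace_def scalar_prod_def atLeast0LessThan)
  also have "\<dots> = (\<Sum>j<k. \<Sum>i<m. B $$ (j,i) * A $$ (i,j))"
    by (subst sum.swap) (simp add: ac_simps)
  also have "\<dots> = mat_trace (B*A)"
    using assms by (simp add: mat_trace_def scalar_prod_def atLeast0LessThan)
  finally show ?thesis .
qed

lemma trace_add: assumes "A \<in> carrier_mat m m" "B \<in> carrier_mat m m"
  shows "mat_trace (A + B) = mat_trace A + mat_trace (B :: 'a::comm_monoid_add mat)"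
  using assms by (simp add: mat_trace_def sum.distrib)

lemma trace_minus: assumes "A \<in> carrier_mat m m" "B \<in> carrier_mat m m"
  shows "mat_trace (A - B) = mat_trace A - mat_trace (B :: 'a::ab_group_add mat)"
  using assms by (simp add: mat_trace_def sum_subtractf)

lemma trace_one[simp]: "mat_trace (1\<^sub>m n :: 'a::semiring_1 mat) = of_nat n"
  by (simp add: mat_trace_def)

lemma trace_kron: assumes "A \<in> carrier_mat a a" "B \<in> carrier_mat b b"
  shows "mat_trace (kron A B) = mat_trace A * mat_trace (B :: 'a::comm_semiring_1 mat)"
proof -
  have "mat_trace (kron A B) = (\<Sum>k<a*b. kron A B $$ (k,k))" using assms by (simp add: mat_trace_def)
  also have "\<dots> = (\<Sum>p<a. \<Sum>q<b. kron A B $$ (p*b+q,p*b+q))" by (rule sum_mult_split)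
  also have "\<dots> = (\<Sum>p<a. \<Sum>q<b. A $$ (p,p) * B $$ (q,q))"
  proof (intro sum.cong refl)
    fix p q assume p: "p \<in> {..<a}" and q: "q \<in> {..<b}"
    have "(p+1)*b \<le> a*b" using p by (intro mult_le_mono1) simp
    then have k: "p*b+q < a*b" using q by simp
    have d: "(p*b+q) div b = p" "(p*b+q) mod b = q" using q by auto
    show "kron A B $$ (p*b+q,p*b+q) = A $$ (p,p) * B $$ (q,q)" using k d assms by simp
  qed
  also have "\<dots> = mat_trace A * mat_trace B" using assms by (simp add: mat_trace_def sum_product)
  finally show ?thesis .
qed

lemma trace_adj_mult: assumes "X \<in> carrier_mat r c" "Y \<in> carrier_mat r c"
  shows "mat_trace (mat_adjoint X * (Y::complex mat)) = (\<Sum>i<c. \<Sum>j<r. cnj (X $$ (j,i)) * Y $$ (j,i))"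
  using assms by (simp add: mat_trace_def scalar_prod_def atLeast0LessThan)

lemma trace_herm: assumes "A \<in> carrier_mat m m" "mat_adjoint A = (A::complex mat)"
  shows "cnj (mat_trace A) = mat_trace A"
proof -
  have "\<And>i. i < m \<Longrightarrow> cnj (A $$ (i,i)) = A $$ (i,i)"
    using assms adj_index[of _ A _] by (metis carrier_matD)
  then show ?thesis using assms by (simp add: mat_trace_def)
qed


lemma cs_complex: fixes x y :: "'i \<Rightarrow> complex" 
  shows "(cmod (\<Sum>i\<in>S. cnj (x i) * y i))^2 \<le> (\<Sum>i\<in>S. (cmod (x i))^2) * (\<Sum>i\<in>S. (cmod (y i))^2)"
proof -
  have "cmod (\<Sum>i\<in>S. cnj (x i) * y i) \<le> (\<Sum>i\<in>S. cmod (x i) * cmod (y i))"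
    by (rule order_trans[OF norm_sum]) (simp add: norm_mult)
  then have "(cmod (\<Sum>i\<in>S. cnj (x i) * y i))^2 \<le> (\<Sum>i\<in>S. cmod (x i) * cmod (y i))^2"
    by (simp add: power_mono)
  also have "\<dots> \<le> (\<Sum>i\<in>S. (cmod (x i))^2) * (\<Sum>i\<in>S. (cmod (y i))^2)"
    by (rule Cauchy_Schwarz_ineq_sum)
  finally show ?thesis .
qed

lemma cnj_self: "cnj z * z = complex_of_real ((cmod z)^2)"
  by (metis complex_norm_square mult.commute of_real_power)

lemma main_ineq:
  fixes H Q :: "complex mat"
  assumes H: "H \<in> carrier_mat N N" and Q: "Q \<in> carrier_mat N N"
    and HH: "H * H = H" and QQ: "Q * Q = Q"
    and adjH: "mat_adjoint H = H" and adjQ: "mat_adjoint Q = Q"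
  shows "(mat_trace H - mat_trace ((H*Q) ^\<^sub>m 1)) * (mat_trace ((H*Q) ^\<^sub>m 2) - mat_trace ((H*Q) ^\<^sub>m 3))
      - (mat_trace ((H*Q) ^\<^sub>m 1) - mat_trace ((H*Q) ^\<^sub>m 2))^2 \<ge> 0"
proof -
  have mc: "\<And>(A::complex mat) B. A \<in> carrier_mat N N \<Longrightarrow> B \<in> carrier_mat N N \<Longrightarrow> A * B \<in> carrier_mat N N" by simp
  have mm: "\<And>(A::complex mat) B. A \<in> carrier_mat N N \<Longrightarrow> B \<in> carrier_mat N N \<Longrightarrow> A - B \<in> carrier_mat N N" by (rule minus_carrier_mat)
  have as: "\<And>(A::complex mat) B C. A \<in> carrier_mat N N \<Longrightarrow> B \<in> carrier_mat N N \<Longrightarrow> C \<in> carrier_mat N N \<Longrightarrow> A * B * C = A * (B * C)"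
    by (rule assoc_mult_mat)
  have dl: "\<And>(A::complex mat) B C. A \<in> carrier_mat N N \<Longrightarrow> B \<in> carrier_mat N N \<Longrightarrow> C \<in> carrier_mat N N \<Longrightarrow> A * (B - C) = A * B - A * C"
    by (rule mult_minus_distrib_mat)
  have dr: "\<And>(A::complex mat) B C. A \<in> carrier_mat N N \<Longrightarrow> B \<in> carrier_mat N N \<Longrightarrow> C \<in> carrier_mat N N \<Longrightarrow> (A - B) * C = A * C - B * C"
    by (rule minus_mult_distrib_mat)
  have tm: "\<And>(A::complex mat) B. A \<in> carrier_mat N N \<Longrightarrow> B \<in> carrier_mat N N \<Longrightarrow> mat_trace (A - B) = mat_trace A - mat_trace B"
    by (rule trace_minus)
  have adjm: "\<And>(A::complex mat) B. A \<in> carrier_mat N N \<Longrightarrow> B \<in> carrier_mat N N \<Longrightarrow> mat_adjoint (A * B) = mat_adjoint B * mat_adjoint A"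
    by (rule adj_mult)
  have adjs: "\<And>(A::complex mat) B. A \<in> carrier_mat N N \<Longrightarrow> B \<in> carrier_mat N N \<Longrightarrow> mat_adjoint (A - B) = mat_adjoint A - mat_adjoint B"
    by (rule adj_minus)
  have HHZ: "\<And>Z. Z \<in> carrier_mat N N \<Longrightarrow> H * (H * Z) = H * Z" using as[OF H H] HH by metis
  have QQZ: "\<And>Z. Z \<in> carrier_mat N N \<Longrightarrow> Q * (Q * Z) = Q * Z" using as[OF Q Q] QQ by metis
  have tc: "\<And>(A::complex mat) B. A \<in> carrier_mat N N \<Longrightarrow> B \<in> carrier_mat N N \<Longrightarrow> mat_trace (A * B) = mat_trace (B * A)"
    by (rule trace_comm)
  note ns = mc mm as dl dr tm adjm adjs HHZ QQZ HH QQ adjH adjQ H Q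
  have cyc: "mat_trace (H * (Z * H)) = mat_trace (H * Z)" if Z: "Z \<in> carrier_mat N N" for Z
  proof -
    have "mat_trace (H * (Z * H)) = mat_trace ((H * Z) * H)" using as[OF H Z H] by simp
    also have "\<dots> = mat_trace (H * (H * Z))" using tc[OF mc[OF H Z] H] .
    also have "\<dots> = mat_trace (H * Z)" using HHZ[OF Z] by simp
    finally show ?thesis .
  qed
  define t1 where "t1 = mat_trace (H * Q)"
  define t2 where "t2 = mat_trace (H * (Q * (H * Q)))"
  define t3 where "t3 = mat_trace (H * (Q * (H * (Q * (H * Q)))))"
  have e1: "mat_trace ((H*Q) ^\<^sub>m 1) = t1" unfolding t1_def using H Q by simp
  have e2: "mat_trace ((H*Q) ^\<^sub>m 2) = t2" unfolding t2_def using H Q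
    by (simp add: numeral_2_eq_2 as)
  have e3: "mat_trace ((H*Q) ^\<^sub>m 3) = t3" unfolding t3_def using H Q
    by (simp add: numeral_3_eq_3 as)
  have c1: "mat_trace (H * (Q * H)) = t1" unfolding t1_def by (rule cyc[OF Q])
  have c2: "mat_trace (H * (Q * (H * (Q * H)))) = t2" unfolding t2_def
    using cyc[of "Q * (H * Q)"] by (simp only: ns)
  have c3: "mat_trace (H * (Q * (H * (Q * (H * (Q * H)))))) = t3" unfolding t3_def
    using cyc[of "Q * (H * (Q * (H * Q)))"] by (simp only: ns)
  define X where "X = H - Q * H"
  define Y where "Y = X * (H * (Q * H))"
  have X: "X \<in> carrier_mat N N" unfolding X_def by (rule mm[OF H mc[OF Q H]])
  have Y: "Y \<in> carrier_mat N N" unfolding Y_def by (rule mc[OF X mc[OF H mc[OF Q H]]])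
  have ea: "mat_trace (mat_adjoint X * X) = mat_trace H - t1"
    unfolding X_def by (simp only: ns c1) simp
  have eb: "mat_trace (mat_adjoint X * Y) = t1 - t2"
    unfolding Y_def X_def by (simp only: ns c1 c2) simp
  have ec: "mat_trace (mat_adjoint Y * Y) = t2 - t3"
    unfolding Y_def X_def by (simp only: ns c2 c3) simp
  have h1: "cnj t1 = t1" unfolding c1[symmetric]
    by (rule trace_herm[of _ N]) (simp_all only: ns)
  have h2: "cnj t2 = t2" unfolding c2[symmetric]
    by (rule trace_herm[of _ N]) (simp_all only: ns)
  define x where "x = (\<lambda>(i,j). X $$ (j,i))"
  define y where "y = (\<lambda>(i,j). Y $$ (j,i))"
  have sp: "\<And>f. (\<Sum>i<N. \<Sum>j<N. f (i,j)) = (\<Sum>p\<in>{..<N}\<times>{..<N}. f p)"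
    by (simp add: sum.cartesian_product)
  have ta: "mat_trace (mat_adjoint X * X) = (\<Sum>p\<in>{..<N}\<times>{..<N}. cnj (x p) * x p)"
    unfolding trace_adj_mult[OF X X] sp[symmetric] x_def by simp
  have tb: "mat_trace (mat_adjoint X * Y) = (\<Sum>p\<in>{..<N}\<times>{..<N}. cnj (x p) * y p)"
    unfolding trace_adj_mult[OF X Y] sp[symmetric] x_def y_def by simp
  have tcc: "mat_trace (mat_adjoint Y * Y) = (\<Sum>p\<in>{..<N}\<times>{..<N}. cnj (y p) * y p)"
    unfolding trace_adj_mult[OF Y Y] sp[symmetric] y_def by simp
  define \<alpha> where "\<alpha> = (\<Sum>p\<in>{..<N}\<times>{..<N}. (cmod (x p))^2)"
  define \<gamma> where "\<gamma> = (\<Sum>p\<in>{..<N}\<times>{..<N}. (cmod (y p))^2)"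
  have a: "mat_trace H - t1 = complex_of_real \<alpha>" using ea ta unfolding \<alpha>_def cnj_self by simp
  have c: "t2 - t3 = complex_of_real \<gamma>" using ec tcc unfolding \<gamma>_def cnj_self by simp
  have cs: "(cmod (t1 - t2))^2 \<le> \<alpha> * \<gamma>" using cs_complex[of x y "{..<N}\<times>{..<N}"] eb tb
    unfolding \<alpha>_def \<gamma>_def by simp
  have breal: "t1 - t2 = complex_of_real (Re (t1 - t2))" using h1 h2
    by (metis complex_cnj_diff complex_is_Real_iff Reals_cnj_iff of_real_Re)
  have "\<bar>Re (t1 - t2)\<bar>^2 \<le> (cmod (t1 - t2))^2"
    by (rule power_mono[OF abs_Re_le_cmod abs_ge_zero])
  then have "(Re (t1 - t2))^2 \<le> (cmod (t1 - t2))^2" by simp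
  then have ineq: "(Re (t1 - t2))^2 \<le> \<alpha> * \<gamma>" using cs by linarith
  have "(mat_trace H - t1) * (t2 - t3) - (t1 - t2)^2 = complex_of_real (\<alpha> * \<gamma> - (Re (t1 - t2))^2)"
    by (subst breal, unfold a c) simp
  also have "\<dots> \<ge> 0" using ineq by (simp add: less_eq_complex_def)
  finally show ?thesis unfolding e1 e2 e3 .
qed



context vec_space
begin

lemma trace_idem_rank:
  assumes P: "P \<in> carrier_mat n n" and idem: "P * P = P"
  shows "mat_trace P = of_nat (rank P)"
proof -
  have li0: "lin_indpt {}"
    by (metis (no_types) empty_subsetI fin_dim finite_basis_exists subset_li_is_li vec_vs vectorspace.basis_def)
  obtain U where max: "maximal U (\<lambda>T. T \<subseteq> set (cols P) \<and> lin_indpt T)" and finU: "finite U"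
    using maximal_exists_superset[of "set (cols P)" "(\<lambda>T. T \<subseteq> set (cols P) \<and> lin_indpt T)" "{}"] li0
    by auto
  have rk: "rank P = card U" using rank_card_indpt[OF P max] .
  have UP: "U \<subseteq> set (cols P)" and liU: "lin_indpt U" using max unfolding maximal_def by auto
  have colsP: "set (cols P) \<subseteq> carrier_vec n" using P cols_dim by (metis carrier_matD(1))
  have Uc: "U \<subseteq> carrier_vec n" using UP colsP by auto
  obtain ws where ws: "set ws = U" "distinct ws" using finite_distinct_list[OF finU] by blast
  define k where "k = length ws"
  have kU: "k = card U" using ws k_def distinct_card by metis
  define W where "W = mat_of_cols n ws"
  have W: "W \<in> carrier_mat n k" unfolding W_def k_def by simp
  have wsc: "set ws \<subseteq> carrier_vec n" using ws Uc by simp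
  have colsW: "cols W = ws" unfolding W_def using wsc by simp
  have inspan: "s \<in> span U" if s: "s \<in> set (cols P)" for s
  proof (rule ccontr)
    assume ns: "s \<notin> span U"
    have sc: "s \<in> carrier_vec n" using s colsP by auto
    have sU: "s \<notin> U" using ns Uc span_mem by auto
    have "lin_indpt (U \<union> {s})" using lin_dep_iff_in_span[OF Uc liU _ sU] sc ns by auto
    then have "U \<union> {s} \<subseteq> set (cols P) \<and> lin_indpt (U \<union> {s})" using UP s by auto
    then have "U \<union> {s} = U" using max unfolding maximal_def by blast
    then show False using sU by auto
  qed
  have spanW: "span U = {y\<in>carrier_vec n. \<exists>x\<in>carrier_vec k. W *\<^sub>v x = y}"
    using col_space_eq[OF W] W unfolding col_space_def colsW ws(1) by auto
  have "\<forall>j<n. \<exists>x. x \<in> carrier_vec k \<and> W *\<^sub>v x = col P j"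
  proof (intro allI impI)
    fix j assume j: "j < n"
    have "col P j \<in> set (cols P)" using j P by (simp add: cols_def)
    then have "col P j \<in> span U" by (rule inspan)
    then show "\<exists>x. x \<in> carrier_vec k \<and> W *\<^sub>v x = col P j" unfolding spanW by auto
  qed
  then obtain xf where xf: "\<And>j. j < n \<Longrightarrow> xf j \<in> carrier_vec k \<and> W *\<^sub>v xf j = col P j"
    by metis
  define R where "R = mat_of_cols k (map xf [0..<n])"
  have R: "R \<in> carrier_mat k n" unfolding R_def using mat_of_cols_carrier(1)[of k "map xf [0..<n]"] by simp
  have colR: "col R j = xf j" if "j < n" for j
    unfolding R_def using that xf by simp
  have WR: "W * R = P"
  proof (rule eq_matI)
    fix i j assume i: "i < dim_row P" and j: "j < dim_col P"
    have "(W * R) $$ (i,j) = col (W * R) j $ i" using i j W R P by simp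
    also have "\<dots> = (W *\<^sub>v xf j) $ i" using col_mult2[OF W R] j P colR by simp
    also have "\<dots> = P $$ (i,j)" using xf[of j] i j P by simp
    finally show "(W * R) $$ (i,j) = P $$ (i,j)" .
  qed (use W R P in auto)
  have PW: "P * W = W"
  proof (rule eq_matI)
    fix i l assume i: "i < dim_row W" and l: "l < dim_col W"
    have "col W l \<in> U" using l colsW ws(1) by (metis cols_length cols_nth nth_mem)
    then obtain j where j: "j < n" "col W l = col P j" using UP P
      by (metis carrier_matD(2) cols_length cols_nth in_set_conv_nth subsetD)
    have "(P * W) $$ (i,l) = col (P * W) l $ i" using i l W P by simp
    also have "\<dots> = (P *\<^sub>v col P j) $ i" using col_mult2[OF P W] l W j by simp
    also have "\<dots> = col (P * P) j $ i" using col_mult2[OF P P] j by simp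
    also have "\<dots> = col W l $ i" using idem j by simp
    also have "\<dots> = W $$ (i,l)" using i l W by simp
    finally show "(P * W) $$ (i,l) = W $$ (i,l)" .
  qed (use W P in auto)
  have RW: "R * W = 1\<^sub>m k"
  proof -
    have WRW: "W * (R * W) = W" using assoc_mult_mat[OF W R W] WR PW by simp
    have distW: "distinct (cols W)" unfolding colsW by (rule ws(2))
    have liW: "lin_indpt (set (cols W))" unfolding colsW ws(1) by (rule liU)
    show ?thesis
    proof (rule eq_matI)
      fix i l assume i: "i < dim_row (1\<^sub>m k)" and l: "l < dim_col (1\<^sub>m k)"
      define v where "v = col (R * W) l - unit_vec k l"
      have l': "l < k" using l by simp
      have RWc: "R * W \<in> carrier_mat k k" using mult_carrier_mat[OF R W] .
      have c1: "col (R * W) l \<in> carrier_vec k" using col_carrier_vec[OF l' RWc] .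
      have vc: "v \<in> carrier_vec k" unfolding v_def by (rule minus_carrier_vec[OF c1 unit_vec_carrier])
      have "W *\<^sub>v v = W *\<^sub>v col (R * W) l - W *\<^sub>v unit_vec k l"
        unfolding v_def by (rule mult_minus_distrib_mat_vec[OF W c1 unit_vec_carrier])
      also have "W *\<^sub>v col (R * W) l = col W l"
        using col_mult2[OF W RWc l'] WRW by simp
      also have "W *\<^sub>v unit_vec k l = col W l"
        using col_mult2[OF W one_carrier_mat l'] col_one[OF l'] right_mult_one_mat[OF W] l' by simp
      finally have "W *\<^sub>v v = 0\<^sub>v n" using minus_cancel_vec[OF col_carrier_vec[OF l' W]] by simp
      then have "v = 0\<^sub>v k" using lin_depI[OF W vc _ _ distW] liW by blast
      then have "v $ i = 0" using i by simp
      moreover have "v $ i = col (R * W) l $ i - unit_vec k l $ i" unfolding v_def using i R W by simp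
      ultimately have "col (R * W) l $ i = unit_vec k l $ i" by simp
      then show "(R * W) $$ (i,l) = 1\<^sub>m k $$ (i,l)" using i l R W by simp
    qed (use R W in auto)
  qed
  have "mat_trace P = mat_trace (W * R)" using WR by simp
  also have "\<dots> = mat_trace (R * W)" by (rule trace_comm[OF W R])
  also have "\<dots> = of_nat k" unfolding RW by (simp add: mat_trace_def)
  finally show ?thesis using rk kU by simp
qed

end


theorem lemma2:
  fixes n r :: nat and P :: "complex mat"
  assumes "n \<ge> 2"
    and "P \<in> carrier_mat (n^2) (n^2)"
    and "mat_adjoint P = P"
    and "P * P = P"
    and "vec_space.rank (n^2) P = r"
  shows "let P1 = kron P (1\<^sub>m n); P2 = kron (1\<^sub>m n) P;
             t = (\<lambda>m::nat. mat_trace ((P1 * P2) ^\<^sub>m m));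
             F = (of_nat (r * n) - t 1) * (t 2 - t 3) - (t 1 - t 2)^2
         in F \<ge> 0"
proof -
  note P = assms(2) and adjP = assms(3) and idem = assms(4) and rk = assms(5)
  define N where "N = n^2 * n"
  define H where "H = kron P (1\<^sub>m n)"
  define Q where "Q = kron (1\<^sub>m n) P"
  have I: "(1\<^sub>m n :: complex mat) \<in> carrier_mat n n" by simp
  have dP: "dim_row P = n^2" "dim_col P = n^2" using P by auto
  have dI: "dim_row (1\<^sub>m n :: complex mat) = n" "dim_col (1\<^sub>m n :: complex mat) = n" by auto
  have H: "H \<in> carrier_mat N N" unfolding H_def N_def
    using kron_carrier[of P "1\<^sub>m n :: complex mat"] unfolding dP dI .
  have Q: "Q \<in> carrier_mat N N" unfolding Q_def N_def
    using kron_carrier[of "1\<^sub>m n :: complex mat" P] unfolding dP dI by (simp only: mult.commute)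
  have HH: "H * H = H" unfolding H_def kron_mult[OF P I P I] idem by simp
  have QQ: "Q * Q = Q" unfolding Q_def kron_mult[OF I P I P] idem by simp
  have adjH: "mat_adjoint H = H" unfolding H_def adj_kron adjP by simp
  have adjQ: "mat_adjoint Q = Q" unfolding Q_def adj_kron adjP by simp
  have trP: "mat_trace P = of_nat r"
    using vec_space.trace_idem_rank[OF P idem] rk by simp
  have trH: "mat_trace H = of_nat (r * n)"
    unfolding H_def trace_kron[OF P I] trP by simp
  have mi: "(of_nat (r * n) - mat_trace ((H*Q) ^\<^sub>m 1)) * (mat_trace ((H*Q) ^\<^sub>m 2) - mat_trace ((H*Q) ^\<^sub>m 3))
      - (mat_trace ((H*Q) ^\<^sub>m 1) - mat_trace ((H*Q) ^\<^sub>m 2))^2 \<ge> 0"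
    using main_ineq[OF H Q HH QQ adjH adjQ] unfolding trH .
  show ?thesis
    using mi unfolding H_def Q_def Let_def .
qed

end
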